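(* Let $S$ be a monoid with a unique zero element in which every nonzero element is invertible, and let $A$ be a finitely generated right $S$-act. If $X$ and $Y$ are minimal generating sets for $A$, then $|X|=|Y|$.
   Context: A (right) $S$-act is a nonempty set $A$ with an action $(a,s)\mapsto as$, $a1=a$, $a(st)=(as)t$. A subset $X\subseteq A$ generates $A$ if $A=\bigcup_{x\in X}xS$; it is a minimal generating set if no proper subset of it generates $A$. $A$ is finitely generated if it has a finite generating set. A zero of the monoid $S$ is an element $z$ with $zs=sz=z$ for all $s\in S$. *)

theory Defs
  imports Main "HOL-Library.Equipollence"
begin

definition right_act :: "'a set \<Rightarrow> ('a \<Rightarrow> 'm::monoid_mult \<Rightarrow> 'a) \<Rightarrow> bool" where
  "right_act A act \<longleftrightarrow> A \<noteq> {} \<and>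
     (\<forall>a\<in>A. \<forall>s. act a s \<in> A) \<and>
     (\<forall>a\<in>A. act a 1 = a) \<and>
     (\<forall>a\<in>A. \<forall>s t. act a (s * t) = act (act a s) t)"

definition generates :: "('a \<Rightarrow> 'm::monoid_mult \<Rightarrow> 'a) \<Rightarrow> 'a set \<Rightarrow> 'a set \<Rightarrow> bool" where
  "generates act X A \<longleftrightarrow> X \<subseteq> A \<and> A = (\<Union>x\<in>X. range (act x))"

definition minimal_generating_set :: "('a \<Rightarrow> 'm::monoid_mult \<Rightarrow> 'a) \<Rightarrow> 'a set \<Rightarrow> 'a set \<Rightarrow> bool" where
  "minimal_generating_set act X A \<longleftrightarrow> generates act X A \<and> (\<forall>Z. Z \<subset> X \<longrightarrow> \<not> generates act Z A)"

definition finitely_generated :: "('a \<Rightarrow> 'm::monoid_mult \<Rightarrow> 'a) \<Rightarrow> 'a set \<Rightarrow> bool" where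
  "finitely_generated act A \<longleftrightarrow> (\<exists>X. finite X \<and> generates act X A)"

definition is_zero :: "'m::monoid_mult \<Rightarrow> bool" where
  "is_zero z \<longleftrightarrow> (\<forall>s. z * s = z \<and> s * z = z)"

definition invertible :: "'m::monoid_mult \<Rightarrow> bool" where
  "invertible s \<longleftrightarrow> (\<exists>t. s * t = 1 \<and> t * s = 1)"

end

theory Submission
  imports Defs
begin

lemma absorb:
  assumes ra: "right_act A act" and m: "minimal_generating_set act X A"
    and x1: "x1 \<in> X" and x': "x' \<in> X" and r: "x1 \<in> range (act x')"
  shows "x1 = x'"
proof (rule ccontr)
  assume ne: "x1 \<noteq> x'"
  from m have g: "generates act X A" and mn: "\<forall>Z. Z \<subset> X \<longrightarrow> \<not> generates act Z A"
    by (auto simp: minimal_generating_set_def)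
  from g have XA: "X \<subseteq> A" and AX: "A = (\<Union>x\<in>X. range (act x))" by (auto simp: generates_def)
  from r obtain s where s: "x1 = act x' s" by auto
  have "generates act (X - {x1}) A"
    unfolding generates_def
  proof (intro conjI)
    show "X - {x1} \<subseteq> A" using XA by auto
    show "A = (\<Union>x\<in>X - {x1}. range (act x))"
    proof
      show "A \<subseteq> (\<Union>x\<in>X - {x1}. range (act x))"
      proof
        fix a assume "a \<in> A"
        then obtain x t where x: "x \<in> X" "a = act x t" using AX by auto
        show "a \<in> (\<Union>x\<in>X - {x1}. range (act x))"
        proof (cases "x = x1")
          case True
          have "a = act x' (s * t)" using x True s ra x' XA by (auto simp: right_act_def)
          then show ?thesis using x' ne by auto
        next
          case False then show ?thesis using x by auto
        qed
      qed
      show "(\<Union>x\<in>X - {x1}. range (act x)) \<subseteq> A" using AX by auto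
    qed
  qed
  moreover have "X - {x1} \<subset> X" using x1 by auto
  ultimately show False using mn by auto
qed

lemma lep:
  assumes ra: "right_act A act" and m: "minimal_generating_set act X A"
    and mY: "minimal_generating_set act Y A"
  shows "X \<lesssim> Y"
proof -
  from m have XA: "X \<subseteq> A" and AX: "A = (\<Union>x\<in>X. range (act x))"
    by (auto simp: minimal_generating_set_def generates_def)
  from mY have YA: "Y \<subseteq> A" and AY: "A = (\<Union>x\<in>Y. range (act x))"
    by (auto simp: minimal_generating_set_def generates_def)
  define f where "f x = (SOME y. y \<in> Y \<and> x \<in> range (act y))" for x
  have f: "f x \<in> Y \<and> x \<in> range (act (f x))" if "x \<in> X" for x
  proof -
    have "\<exists>y. y \<in> Y \<and> x \<in> range (act y)" using that XA AY by blast
    then show ?thesis unfolding f_def by (rule someI_ex)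
  qed
  have "inj_on f X"
  proof (rule inj_onI)
    fix x1 x2 assume a: "x1 \<in> X" "x2 \<in> X" "f x1 = f x2"
    let ?y = "f x1"
    have yA: "?y \<in> A" using f a YA by auto
    then obtain x' u where x': "x' \<in> X" "?y = act x' u" using AX by auto
    have t: "z \<in> range (act x')" if "z \<in> range (act ?y)" for z
    proof -
      from that obtain t where "z = act ?y t" by auto
      then have "z = act x' (u * t)" using x' ra XA by (auto simp: right_act_def)
      then show ?thesis by auto
    qed
    have "x1 = x'" using absorb[OF ra m a(1) x'(1)] t f a by metis
    moreover have "x2 = x'" using absorb[OF ra m a(2) x'(1)] t f a by metis
    ultimately show "x1 = x2" by simp
  qed
  then show ?thesis unfolding lepoll_def using f by blast
qed

theorem lemma3p3:
  fixes A :: "'a set" and act :: "'a \<Rightarrow> 'm::monoid_mult \<Rightarrow> 'a" and X Y :: "'a set"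
  assumes "\<exists>!z::'m. is_zero z"
    and "\<forall>s::'m. \<not> is_zero s \<longrightarrow> invertible s"
    and "right_act A act"
    and "finitely_generated act A"
    and "minimal_generating_set act X A"
    and "minimal_generating_set act Y A"
  shows "X \<approx> Y"
  using lep[OF assms(3,5,6)] lep[OF assms(3,6,5)] by (rule lepoll_antisym)

end
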